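(* Let $k$ be a field of characteristic zero, fix an integer $c\geq 3$, let $a,b,\alpha,\beta$ be positive integers with $\alpha<a$, $\beta<b$, and let $A=k[x,y,z]/(x^a, y^b, z^c, x^\alpha y^\beta)$. If $B=k[x,y]/(x^a, y^b, x^\alpha y^\beta)$ is not almost centered, then $A$ fails the strong Lefschetz property.
   Context: A standard graded Artinian $k$-algebra $A$ has the strong Lefschetz property if there is $\ell\in A_1$ such that for all $t\geq1$ and all $i$ the map $\cdot\ell^t:A_i\to A_{i+t}$ is injective or surjective. With $h_i=\dim_k B_i$ and socle degree $D$ (largest $i$ with $h_i\ne0$), $B$ is almost centered if either $h_{i-1} \leq h_{D-i} \leq h_i$ for all $0 \leq i \leq \lfloor D/2 \rfloor$, or $h_{D-i+1} \leq h_{i} \leq h_{D-i}$ for all $0 \leq i \leq \lfloor D/2 \rfloor$ (with $h_j=0$ for $j<0$ or $j>D$). *)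

theory Defs
  imports Main
begin

(* Monomial quotient algebras modelled by their standard-monomial basis.
   A monomial x^i y^j z^l is the triple (i,j,l).  For a monomial ideal I,
   the quotient k[x,y,z]/I has k-basis the monomials not in I (the set S);
   an element of the quotient is a function S -> k (zero outside S), and the
   product of two standard monomials is the monomial itself if it lies in S,
   and 0 otherwise. *)

type_synonym mon3 = "nat \<times> nat \<times> nat"

definition mdeg :: "mon3 \<Rightarrow> nat" where
  "mdeg m = (case m of (i,j,l) \<Rightarrow> i + j + l)"

definition stdA :: "nat \<Rightarrow> nat \<Rightarrow> nat \<Rightarrow> nat \<Rightarrow> nat \<Rightarrow> mon3 set" where
  "stdA a b c al be = {(i,j,l). i < a \<and> j < b \<and> l < c \<and> \<not> (al \<le> i \<and> be \<le> j)}"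

definition qmult :: "mon3 set \<Rightarrow> (mon3 \<Rightarrow> 'k::field) \<Rightarrow> (mon3 \<Rightarrow> 'k) \<Rightarrow> mon3 \<Rightarrow> 'k" where
  "qmult S f g m = (case m of (i,j,l) \<Rightarrow>
     (if m \<in> S then
        (\<Sum>(i',j',l') \<in> {0..i} \<times> {0..j} \<times> {0..l}. f (i',j',l') * g (i - i', j - j', l - l'))
      else 0))"

definition qone :: "mon3 set \<Rightarrow> mon3 \<Rightarrow> 'k::field" where
  "qone S m = (if m = (0,0,0) \<and> m \<in> S then 1 else 0)"

definition qpow :: "mon3 set \<Rightarrow> (mon3 \<Rightarrow> 'k::field) \<Rightarrow> nat \<Rightarrow> mon3 \<Rightarrow> 'k" where
  "qpow S f t = ((qmult S f) ^^ t) (qone S)"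

definition graded :: "mon3 set \<Rightarrow> nat \<Rightarrow> (mon3 \<Rightarrow> 'k::field) set" where
  "graded S d = {f. \<forall>m. f m \<noteq> 0 \<longrightarrow> m \<in> S \<and> mdeg m = d}"

definition SLP :: "'k::field itself \<Rightarrow> mon3 set \<Rightarrow> bool" where
  "SLP _ S = (\<exists>L \<in> (graded S 1 :: (mon3 \<Rightarrow> 'k) set). \<forall>t\<ge>1. \<forall>i.
      inj_on (\<lambda>f. qmult S (qpow S L t) f) (graded S i)
    \<or> (\<lambda>f. qmult S (qpow S L t) f) ` (graded S i) = graded S (i + t))"

definition hilbB :: "nat \<Rightarrow> nat \<Rightarrow> nat \<Rightarrow> nat \<Rightarrow> int \<Rightarrow> nat" where
  "hilbB a b al be d = (if d < 0 then 0 else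
     card {(i,j). i < a \<and> j < b \<and> \<not> (al \<le> i \<and> be \<le> j) \<and> int (i + j) = d})"

definition socdeg :: "(int \<Rightarrow> nat) \<Rightarrow> int" where
  "socdeg h = (GREATEST d. h d \<noteq> 0)"

definition almost_centered :: "(int \<Rightarrow> nat) \<Rightarrow> bool" where
  "almost_centered h = (let D = socdeg h in
     (\<forall>i. 0 \<le> i \<and> i \<le> D div 2 \<longrightarrow> h (i - 1) \<le> h (D - i) \<and> h (D - i) \<le> h i)
   \<or> (\<forall>i. 0 \<le> i \<and> i \<le> D div 2 \<longrightarrow> h (D - i + 1) \<le> h i \<and> h i \<le> h (D - i)))"

end

theory Submission
  imports Defs "HOL-Computational_Algebra.Polynomial" "HOL-Library.Function_Algebras"
begin

definition cf :: "'k::comm_ring_1 poly poly poly \<Rightarrow> mon3 \<Rightarrow> 'k" where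
  "cf P m = (case m of (i,j,l) \<Rightarrow> coeff (coeff (coeff P l) j) i)"

lemma sum_swap3:
  "(\<Sum>l'\<in>C. \<Sum>j'\<in>B. \<Sum>i'\<in>A. F l' j' i') = (\<Sum>i'\<in>A. \<Sum>j'\<in>B. \<Sum>l'\<in>C. F l' j' i')"
proof -
  have "(\<Sum>l'\<in>C. \<Sum>j'\<in>B. \<Sum>i'\<in>A. F l' j' i') = (\<Sum>l'\<in>C. \<Sum>i'\<in>A. \<Sum>j'\<in>B. F l' j' i')"
    by (rule sum.cong[OF refl], rule sum.swap)
  also have "\<dots> = (\<Sum>i'\<in>A. \<Sum>l'\<in>C. \<Sum>j'\<in>B. F l' j' i')" by (rule sum.swap)
  also have "\<dots> = (\<Sum>i'\<in>A. \<Sum>j'\<in>B. \<Sum>l'\<in>C. F l' j' i')"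
    by (rule sum.cong[OF refl], rule sum.swap)
  finally show ?thesis .
qed

lemma cf_mult:
  "cf (P * Q) (i,j,l) = (\<Sum>(i',j',l') \<in> {0..i} \<times> {0..j} \<times> {0..l}. cf P (i',j',l') * cf Q (i - i', j - j', l - l'))"
proof -
  have "cf (P*Q) (i,j,l) = (\<Sum>l'\<le>l. \<Sum>j'\<le>j. \<Sum>i'\<le>i. coeff (coeff (coeff P l') j') i' * coeff (coeff (coeff Q (l-l')) (j-j')) (i-i'))"
    by (simp add: cf_def coeff_mult coeff_sum)
  also have "\<dots> = (\<Sum>i'\<le>i. \<Sum>j'\<le>j. \<Sum>l'\<le>l. coeff (coeff (coeff P l') j') i' * coeff (coeff (coeff Q (l-l')) (j-j')) (i-i'))"
    by (rule sum_swap3)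
  also have "\<dots> = (\<Sum>(i',j',l') \<in> {0..i} \<times> {0..j} \<times> {0..l}. cf P (i',j',l') * cf Q (i - i', j - j', l - l'))"
    by (simp add: sum.cartesian_product[symmetric] atLeast0AtMost cf_def)
  finally show ?thesis .
qed

definition prj :: "mon3 set \<Rightarrow> 'k::field poly poly poly \<Rightarrow> mon3 \<Rightarrow> 'k" where
  "prj S P = (\<lambda>m. if m \<in> S then cf P m else 0)"

definition dclosed :: "mon3 set \<Rightarrow> bool" where
  "dclosed S \<longleftrightarrow> (\<forall>i j l i' j' l'. (i,j,l) \<in> S \<longrightarrow> i' \<le> i \<longrightarrow> j' \<le> j \<longrightarrow> l' \<le> l \<longrightarrow> (i',j',l') \<in> S)"

lemma qmult_prj:
  assumes "dclosed S"
  shows "qmult S (prj S P) (prj S Q) = prj S (P * Q)"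
proof
  fix m :: mon3
  obtain i j l where m: "m = (i,j,l)" by (cases m) auto
  show "qmult S (prj S P) (prj S Q) m = prj S (P*Q) m"
  proof (cases "m \<in> S")
    case True
    have mem: "(i',j',l') \<in> S \<and> (i-i',j-j',l-l') \<in> S" if "i' \<le> i" "j' \<le> j" "l' \<le> l" for i' j' l'
      using assms True m that unfolding dclosed_def by (meson diff_le_self)
    have "qmult S (prj S P) (prj S Q) m = (\<Sum>(i',j',l') \<in> {0..i}\<times>{0..j}\<times>{0..l}. cf P (i',j',l') * cf Q (i-i',j-j',l-l'))"
      unfolding qmult_def m using True m mem
      by (auto simp: prj_def intro!: sum.cong)
    also have "\<dots> = prj S (P*Q) m" using True m by (simp add: prj_def cf_mult)
    finally show ?thesis .
  next
    case False
    then show ?thesis by (simp add: qmult_def prj_def m)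
  qed
qed

lemma cf_1: "cf 1 m = (if m = (0,0,0) then 1 else 0)"
  by (cases m) (auto simp: cf_def coeff_1)

lemma qone_prj:
  assumes "(0,0,0) \<in> S"
  shows "qone S = (prj S 1 :: mon3 \<Rightarrow> 'k::field)"
  using assms by (auto simp: qone_def prj_def cf_1 fun_eq_iff)

lemma qpow_prj:
  assumes "dclosed S" "(0,0,0) \<in> S"
  shows "qpow S (prj S P) t = prj S (P ^ t)"
proof (induction t)
  case 0
  then show ?case using qone_prj[OF assms(2)] by (simp add: qpow_def)
next
  case (Suc t)
  have "qpow S (prj S P) (Suc t) = qmult S (prj S P) (qpow S (prj S P) t)"
    by (simp add: qpow_def)
  also have "\<dots> = prj S (P ^ Suc t)" using Suc qmult_prj[OF assms(1)] by simp
  finally show ?case .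
qed

lemma cf_add: "cf (P + Q) m = cf P m + cf Q m"
  by (cases m) (simp add: cf_def)
lemma cf_0: "cf 0 m = 0"
  by (cases m) (simp add: cf_def)
lemma cf_sum: "cf (\<Sum>x\<in>A. F x) m = (\<Sum>x\<in>A. cf (F x) m)"
  by (induction A rule: infinite_finite_induct) (auto simp: cf_add cf_0)

lemma prj_add: "prj S (P + Q) = prj S P + prj S Q"
  by (auto simp: prj_def cf_add fun_eq_iff)
lemma prj_0: "prj S 0 = 0"
  by (auto simp: prj_def cf_0 fun_eq_iff)
lemma prj_sum: "prj S (\<Sum>x\<in>A. F x) = (\<Sum>x\<in>A. prj S (F x))"
  by (induction A rule: infinite_finite_induct) (auto simp: prj_add prj_0)

definition Cst :: "'k::comm_ring_1 \<Rightarrow> 'k poly poly poly" where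
  "Cst c = [:[:[:c:]:]:]"

lemma cf_Cst_mult: "cf (Cst c * P) m = c * cf P m"
  by (cases m) (simp add: cf_def Cst_def)

lemma Cst_mult: "Cst a * Cst b = Cst (a * b)"
  by (simp add: Cst_def)
lemma Cst_power: "Cst a ^ n = Cst (a ^ n)"
  by (induction n) (auto simp: Cst_def one_pCons)
lemma Cst_of_nat: "(of_nat n :: 'k::comm_ring_1 poly poly poly) = Cst (of_nat n)"
  by (simp add: Cst_def of_nat_poly)

definition mnm :: "mon3 \<Rightarrow> 'k::comm_ring_1 poly poly poly" where
  "mnm m = (case m of (i,j,l) \<Rightarrow> monom (monom (monom 1 i) j) l)"

definition dl :: "'a \<Rightarrow> 'a \<Rightarrow> 'k::zero_neq_one" where
  "dl m = (\<lambda>m'. if m' = m then 1 else 0)"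

lemma cf_mono: "cf (mnm m) m' = dl m m'"
  by (cases m; cases m') (auto simp: cf_def mnm_def dl_def coeff_monom)

lemma mono_mult: "mnm (i,j,l) * mnm (i',j',l') = mnm (i+i', j+j', l+l')"
  by (simp add: mnm_def mult_monom)

lemma mono_0: "mnm (0,0,0) = 1"
  by (simp add: mnm_def one_pCons monom_0)

definition scl :: "'k::field \<Rightarrow> ('a \<Rightarrow> 'k) \<Rightarrow> ('a \<Rightarrow> 'k)" where
  "scl c f = (\<lambda>m. c * f m)"

interpretation fv: vector_space "scl :: 'k::field \<Rightarrow> ('a \<Rightarrow> 'k) \<Rightarrow> ('a \<Rightarrow> 'k)"
  by unfold_locales (auto simp: scl_def fun_eq_iff algebra_simps)

interpretation fvp: vector_space_pair "scl :: 'k::field \<Rightarrow> ('a \<Rightarrow> 'k) \<Rightarrow> ('a \<Rightarrow> 'k)" "scl :: 'k::field \<Rightarrow> ('b \<Rightarrow> 'k) \<Rightarrow> ('b \<Rightarrow> 'k)"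
  by unfold_locales

lemma sum_fun_apply: "(\<Sum>a\<in>A. F a) x = (\<Sum>a\<in>A. F a x)"
  by (induction A rule: infinite_finite_induct) auto

definition supp_in :: "'a set \<Rightarrow> ('a \<Rightarrow> 'k::field) set" where
  "supp_in M = {f. \<forall>m. f m \<noteq> 0 \<longrightarrow> m \<in> M}"

lemma subspace_supp_in: "fv.subspace (supp_in M)"
  unfolding fv.subspace_def supp_in_def by (auto simp: scl_def) (metis add.right_neutral)

lemma dl_in_supp: "m \<in> M \<Longrightarrow> dl m \<in> supp_in M"
  by (auto simp: dl_def supp_in_def)

lemma span_dl_subset: "fv.span (dl ` M) \<subseteq> supp_in M"
  by (rule fv.span_minimal) (auto intro: dl_in_supp subspace_supp_in)

lemma sum_dl_expand:
  assumes "finite M" "f \<in> supp_in M"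
  shows "f = (\<Sum>m\<in>M. scl (f m) (dl m))"
proof
  fix x
  have "(\<Sum>m\<in>M. scl (f m) (dl m)) x = (\<Sum>m\<in>M. f m * dl m x)"
    by (simp add: scl_def sum_fun_apply)
  also have "\<dots> = (if x \<in> M then f x else 0)"
    using assms(1) by (simp add: dl_def if_distrib cong: if_cong)
  also have "\<dots> = f x" using assms(2) by (auto simp: supp_in_def)
  finally show "f x = (\<Sum>m\<in>M. scl (f m) (dl m)) x" by simp
qed

lemma span_dl:
  assumes fin: "finite M"
  shows "fv.span (dl ` M) = supp_in M"
proof (rule equalityI)
  show "fv.span (dl ` M) \<subseteq> supp_in M" by (rule span_dl_subset)
  show "supp_in M \<subseteq> fv.span (dl ` M)"
  proof
    fix f assume f: "f \<in> supp_in M"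
    have "(\<Sum>m\<in>M. scl (f m) (dl m)) \<in> fv.span (dl ` M)"
      by (rule fv.span_sum, rule fv.span_scale, rule fv.span_base, simp)
    then show "f \<in> fv.span (dl ` M)" by (simp only: sum_dl_expand[OF fin f, symmetric])
  qed
qed

lemma dl_inj: "inj (dl :: 'a \<Rightarrow> 'a \<Rightarrow> 'k::field)"
proof (rule injI)
  fix x y :: 'a
  assume "dl x = (dl y :: 'a \<Rightarrow> 'k)"
  then have "dl x x = (dl y x :: 'k)" by simp
  then show "x = y" by (simp add: dl_def split: if_splits)
qed

lemma independent_dl: "fv.independent (dl ` M :: ('a \<Rightarrow> 'k::field) set)"
proof
  assume "fv.dependent (dl ` M :: ('a \<Rightarrow> 'k) set)"
  then obtain m where m: "m \<in> M" "dl m \<in> fv.span (dl ` M - {dl m} :: ('a \<Rightarrow> 'k) set)"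
    unfolding fv.dependent_def by auto
  have "dl ` M - {dl m} = (dl ` (M - {m}) :: ('a \<Rightarrow> 'k) set)"
  proof -
    have "inj (dl :: 'a \<Rightarrow> 'a \<Rightarrow> 'k)" by (rule dl_inj)
    from image_set_diff[OF this, of M "{m}"] show ?thesis by simp
  qed
  then have "(dl m :: 'a \<Rightarrow> 'k) \<in> fv.span (dl ` (M - {m}))" using m(2) by simp
  moreover have "fv.span (dl ` (M - {m}) :: ('a \<Rightarrow> 'k) set) \<subseteq> supp_in (M - {m})" by (rule span_dl_subset)
  ultimately have "(dl m :: 'a \<Rightarrow> 'k) \<in> supp_in (M - {m})" by blast
  then have "(dl m :: 'a \<Rightarrow> 'k) m \<noteq> 0 \<longrightarrow> m \<in> M - {m}" unfolding supp_in_def by blast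
  then show False by (simp add: dl_def)
qed

lemma card_dl: "card (dl ` M :: ('a \<Rightarrow> 'k::field) set) = card M"
  by (rule card_image) (meson dl_inj inj_on_subset subset_UNIV)

lemma qmult_add2: "qmult S g (f1 + f2) = qmult S g f1 + qmult S g f2"
proof
  fix m :: mon3
  obtain i j l where m: "m = (i,j,l)" by (cases m)
  show "qmult S g (f1 + f2) m = (qmult S g f1 + qmult S g f2) m"
    unfolding m qmult_def by (simp add: sum.distrib[symmetric] distrib_left split_def)
qed

lemma qmult_scl2: "qmult S g (scl c f) = scl c (qmult S g f)"
proof
  fix m :: mon3
  obtain i j l where m: "m = (i,j,l)" by (cases m)
  show "qmult S g (scl c f) m = scl c (qmult S g f) m"
    unfolding m qmult_def scl_def by (simp add: sum_distrib_left mult.left_commute split_def)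
qed

lemma qmult_zero2: "qmult S g 0 = 0"
proof
  fix m :: mon3
  obtain i j l where m: "m = (i,j,l)" by (cases m)
  show "qmult S g 0 m = 0 m"
    unfolding m qmult_def by (simp add: split_def)
qed

lemma lin_iff:
  fixes f :: "('a \<Rightarrow> 'k::field) \<Rightarrow> ('a \<Rightarrow> 'k)"
  shows "Vector_Spaces.linear scl scl f \<longleftrightarrow>
  (\<forall>x y. f (x + y) = f x + f y) \<and> (\<forall>c x. f (scl c x) = scl c (f x))"
proof -
  have "vector_space (scl :: 'k \<Rightarrow> ('a \<Rightarrow> 'k) \<Rightarrow> _)" by (rule fv.vector_space_axioms)
  then show ?thesis unfolding Vector_Spaces.linear_iff by blast
qed

lemma linear_qmult: "Vector_Spaces.linear scl scl (qmult S g)"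
  unfolding lin_iff by (simp add: qmult_add2 qmult_scl2)

definition hom :: "nat \<Rightarrow> 'k::comm_ring_1 poly poly poly \<Rightarrow> bool" where
  "hom d P \<longleftrightarrow> (\<forall>m. cf P m \<noteq> 0 \<longrightarrow> mdeg m = d)"

definition zfree :: "'k::comm_ring_1 poly poly poly \<Rightarrow> bool" where
  "zfree P \<longleftrightarrow> (\<forall>i j l. cf P (i,j,l) \<noteq> 0 \<longrightarrow> l = 0)"

lemma sum_nonzero_ex: "sum f A \<noteq> 0 \<Longrightarrow> \<exists>x\<in>A. f x \<noteq> 0"
  by (meson sum.neutral)

lemma cf_mult_nonzero:
  assumes "cf (P * Q) (i,j,l) \<noteq> 0"
  shows "\<exists>i' j' l'. i' \<le> i \<and> j' \<le> j \<and> l' \<le> l \<and> cf P (i',j',l') \<noteq> 0 \<and> cf Q (i-i',j-j',l-l') \<noteq> 0"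
proof -
  from assms obtain x where x: "x \<in> {0..i}\<times>{0..j}\<times>{0..l}"
    "(case x of (i',j',l') \<Rightarrow> cf P (i',j',l') * cf Q (i - i', j - j', l - l')) \<noteq> 0"
    unfolding cf_mult by (auto dest: sum_nonzero_ex)
  obtain i' j' l' where xe: "x = (i',j',l')" by (cases x)
  have "i' \<le> i" "j' \<le> j" "l' \<le> l" "cf P (i',j',l') \<noteq> 0" "cf Q (i-i',j-j',l-l') \<noteq> 0"
    using x xe by auto
  then show ?thesis by blast
qed

lemma hom_mult: "hom d P \<Longrightarrow> hom e Q \<Longrightarrow> hom (d + e) (P * Q)"
  unfolding hom_def
proof (intro allI impI)
  fix m assume hP: "\<forall>m. cf P m \<noteq> 0 \<longrightarrow> mdeg m = d" and hQ: "\<forall>m. cf Q m \<noteq> 0 \<longrightarrow> mdeg m = e"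
    and nz: "cf (P * Q) m \<noteq> 0"
  obtain i j l where m: "m = (i,j,l)" by (cases m)
  from cf_mult_nonzero[OF nz[unfolded m]] obtain i' j' l' where
    le: "i' \<le> i" "j' \<le> j" "l' \<le> l" and n1: "cf P (i',j',l') \<noteq> 0" and n2: "cf Q (i-i',j-j',l-l') \<noteq> 0"
    by blast
  from hP n1 hQ n2 have "i'+j'+l' = d" "(i-i')+(j-j')+(l-l') = e" by (auto simp: mdeg_def)
  then show "mdeg m = d + e" using le by (simp add: m mdeg_def)
qed

lemma zfree_mult: "zfree P \<Longrightarrow> zfree Q \<Longrightarrow> zfree (P * Q)"
  unfolding zfree_def
proof (intro allI impI)
  fix i j l assume hP: "\<forall>i j l. cf P (i,j,l) \<noteq> 0 \<longrightarrow> l = 0" and hQ: "\<forall>i j l. cf Q (i,j,l) \<noteq> 0 \<longrightarrow> l = 0"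
    and nz: "cf (P * Q) (i,j,l) \<noteq> 0"
  from cf_mult_nonzero[OF nz] obtain i' j' l' where
    le: "i' \<le> i" "j' \<le> j" "l' \<le> l" and n1: "cf P (i',j',l') \<noteq> 0" and n2: "cf Q (i-i',j-j',l-l') \<noteq> 0"
    by blast
  have "l' = 0" using hP n1 by blast
  moreover have "l - l' = 0" using hQ n2 by blast
  ultimately show "l = 0" using le by simp
qed

lemma hom_add: "hom d P \<Longrightarrow> hom d Q \<Longrightarrow> hom d (P + Q)"
  unfolding hom_def cf_add by (metis add.right_neutral)
lemma zfree_add: "zfree P \<Longrightarrow> zfree Q \<Longrightarrow> zfree (P + Q)"
  unfolding zfree_def cf_add by (metis add.right_neutral)
lemma hom_0: "hom d 0"
  unfolding hom_def by (simp add: cf_0)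
lemma zfree_0: "zfree 0"
  unfolding zfree_def by (simp add: cf_0)
lemma hom_sum: "(\<And>x. x \<in> A \<Longrightarrow> hom d (F x)) \<Longrightarrow> hom d (\<Sum>x\<in>A. F x)"
  by (induction A rule: infinite_finite_induct) (auto intro: hom_add hom_0)
lemma zfree_sum: "(\<And>x. x \<in> A \<Longrightarrow> zfree (F x)) \<Longrightarrow> zfree (\<Sum>x\<in>A. F x)"
  by (induction A rule: infinite_finite_induct) (auto intro: zfree_add zfree_0)
lemma hom_Cst_mult: "hom d P \<Longrightarrow> hom d (Cst c * P)"
  unfolding hom_def cf_Cst_mult by (metis mult_zero_right)
lemma zfree_Cst_mult: "zfree P \<Longrightarrow> zfree (Cst c * P)"
  unfolding zfree_def cf_Cst_mult by (metis mult_zero_right)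
lemma hom_mono: "hom (mdeg m) (mnm m)"
  unfolding hom_def by (simp add: cf_mono dl_def)
lemma zfree_mono: "zfree (mnm (i,j,0))"
  unfolding zfree_def by (simp add: cf_mono dl_def)
lemma hom_1: "hom 0 1"
  unfolding hom_def by (simp add: cf_1 mdeg_def)
lemma zfree_1: "zfree 1"
  unfolding zfree_def by (simp add: cf_1)
lemma hom_power: "hom d P \<Longrightarrow> hom (n * d) (P ^ n)"
  by (induction n) (auto simp: hom_1 dest: hom_mult)
lemma zfree_power: "zfree P \<Longrightarrow> zfree (P ^ n)"
  by (induction n) (auto simp: zfree_1 intro: zfree_mult)

lemma prj_hom_zfree:
  assumes "hom d P" "zfree P"
  shows "prj S P \<in> supp_in {m \<in> S. mdeg m = d \<and> snd (snd m) = 0}"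
  using assms unfolding supp_in_def prj_def hom_def zfree_def
  by (auto split: if_splits)

lemma prj_hom:
  assumes "hom d P"
  shows "prj S P \<in> supp_in {m \<in> S. mdeg m = d}"
  using assms unfolding supp_in_def prj_def hom_def by (auto split: if_splits)

lemma prj_Cst_mult: "prj S (Cst c * P) = scl c (prj S P)"
  by (auto simp: prj_def scl_def cf_Cst_mult fun_eq_iff)

lemma mono_z: "mnm (0,0,q) = (monom 1 q :: 'k::comm_ring_1 poly poly poly)"
  by (simp add: mnm_def monom_0 one_pCons)

lemma cf_monoz_mult: "cf (mnm (0,0,w) * G) (i,j,l) = (if w \<le> l then cf G (i,j,l-w) else 0)"
  by (simp add: mono_z cf_def coeff_monom_mult)

definition lift :: "mon3 set \<Rightarrow> (mon3 \<Rightarrow> 'k) \<Rightarrow> 'k::comm_ring_1 poly poly poly" where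
  "lift S f = (\<Sum>m\<in>S. Cst (f m) * mnm m)"

lemma cf_lift: "finite S \<Longrightarrow> cf (lift S f) m = (if m \<in> S then f m else 0)"
  by (simp add: lift_def cf_sum cf_Cst_mult cf_mono dl_def if_distrib cong: if_cong)

lemma prj_lift: "finite S \<Longrightarrow> f \<in> supp_in S \<Longrightarrow> prj S (lift S f) = f"
  by (auto simp: prj_def cf_lift supp_in_def fun_eq_iff)

lemma hom_lift: "finite S \<Longrightarrow> f \<in> supp_in {m \<in> S. mdeg m = d} \<Longrightarrow> hom d (lift S f)"
  unfolding hom_def by (auto simp: cf_lift supp_in_def split: if_splits)

lemma prj_mono: "m \<in> S \<Longrightarrow> prj S (mnm m) = dl m"
  by (auto simp: prj_def cf_mono dl_def fun_eq_iff)

lemma ker_exists: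
  fixes U :: "('a \<Rightarrow> 'k::field) \<Rightarrow> ('a \<Rightarrow> 'k)"
  assumes finX: "finite X" and indX: "fv.independent X" and finY: "finite Y"
    and card: "card Y < card X" and lin: "Vector_Spaces.linear scl scl U"
    and img: "U ` X \<subseteq> fv.span Y"
  shows "\<exists>v\<in>fv.span X. v \<noteq> 0 \<and> U v = 0"
proof (rule ccontr)
  assume "\<not> (\<exists>v\<in>fv.span X. v \<noteq> 0 \<and> U v = 0)"
  then have "\<forall>v\<in>fv.span X. U v = 0 \<longrightarrow> v = 0" by blast
  then have inj: "inj_on U (fv.span X)"
    using fvp.linear_inj_on_iff_eq_0[OF lin fv.subspace_span] by blast
  have ind2: "fv.independent (U ` X)"
    by (rule fvp.linear_independent_injective_image[OF lin indX inj])
  have "inj_on U X" using inj fv.span_superset by (metis inj_on_subset)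
  then have "card (U ` X) = card X" by (rule card_image)
  moreover have "card (U ` X) \<le> card Y"
    using fv.independent_span_bound[OF finY ind2 img] by blast
  ultimately show False using card by simp
qed

locale Salg =
  fixes S :: "mon3 set" and c :: nat
  assumes dcl: "dclosed S" and finS: "finite S" and zeroS: "(0,0,0) \<in> S"
    and zbound: "\<And>i j l. (i,j,l) \<in> S \<Longrightarrow> l < c"
    and zunif: "\<And>i j l l'. l < c \<Longrightarrow> l' < c \<Longrightarrow> (i,j,l) \<in> S \<longleftrightarrow> (i,j,l') \<in> S"
begin

definition Sd :: "nat \<Rightarrow> mon3 set" where "Sd d = {m \<in> S. mdeg m = d}"
definition Mz :: "nat \<Rightarrow> mon3 set" where "Mz d = {m \<in> S. mdeg m = d \<and> snd (snd m) = 0}"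

lemma finite_Sd: "finite (Sd d)" using finS by (simp add: Sd_def)
lemma finite_Mz: "finite (Mz d)" using finS by (simp add: Mz_def)

lemma graded_eq: "graded S d = supp_in (Sd d)"
  by (auto simp: graded_def supp_in_def Sd_def)

lemma graded_span: "(graded S d :: (mon3 \<Rightarrow> 'k::field) set) = fv.span (dl ` Sd d)"
  by (simp add: graded_eq span_dl[OF finite_Sd])

lemma Mz_span_sub: "(fv.span (dl ` Mz d) :: (mon3 \<Rightarrow> 'k::field) set) \<subseteq> graded S d"
proof -
  have "supp_in (Mz d) \<subseteq> (supp_in (Sd d) :: (mon3 \<Rightarrow> 'k) set)"
    by (auto simp: supp_in_def Mz_def Sd_def)
  moreover have "fv.span (dl ` Mz d) = (supp_in (Mz d) :: (mon3 \<Rightarrow> 'k) set)" by (rule span_dl[OF finite_Mz])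
  moreover have "graded S d = (supp_in (Sd d) :: (mon3 \<Rightarrow> 'k) set)" by (rule graded_eq)
  ultimately show ?thesis by simp
qed

definition ell :: "(mon3 \<Rightarrow> 'k) \<Rightarrow> 'k::field poly poly poly" where
  "ell L = Cst (L (1,0,0)) * mnm (1,0,0) + Cst (L (0,1,0)) * mnm (0,1,0)"

definition PLx :: "(mon3 \<Rightarrow> 'k) \<Rightarrow> 'k::field poly poly poly" where
  "PLx L = Cst (L (0,0,1)) * mnm (0,0,1) + ell L"

lemma hom_mono1: "hom 1 (mnm (1,0,0))" "hom 1 (mnm (0,1,0))" "hom 1 (mnm (0,0,1))"
  using hom_mono[of "(1,0,0)"] hom_mono[of "(0,1,0)"] hom_mono[of "(0,0,1)"] by (simp_all add: mdeg_def)

lemma hom_ell: "hom 1 (ell L)"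
  unfolding ell_def by (intro hom_add hom_Cst_mult hom_mono1)

lemma zfree_ell: "zfree (ell L)"
  unfolding ell_def by (intro zfree_add zfree_Cst_mult zfree_mono)

lemma prj_PLx:
  assumes "L \<in> graded S 1"
  shows "prj S (PLx L) = L"
proof
  fix m :: mon3
  obtain i j l where m: "m = (i,j,l)" by (cases m)
  show "prj S (PLx L) m = L m"
  proof (cases "m \<in> S \<and> mdeg m = 1")
    case True
    then have "m = (1,0,0) \<or> m = (0,1,0) \<or> m = (0,0,1)" using m by (auto simp: mdeg_def)
    then show ?thesis using True
      by (auto simp: prj_def PLx_def ell_def cf_add cf_Cst_mult cf_mono dl_def)
  next
    case False
    have "L m \<noteq> 0 \<longrightarrow> m \<in> S \<and> mdeg m = 1" using assms unfolding graded_def by blast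
    then have "L m = 0" using False by blast
    moreover have "prj S (PLx L) m = 0"
    proof (cases "m \<in> S")
      case True
      then have "mdeg m \<noteq> 1" using False by simp
      then show ?thesis using True m
        by (auto simp: prj_def PLx_def ell_def cf_add cf_Cst_mult cf_mono dl_def mdeg_def)
    qed (simp add: prj_def)
    ultimately show ?thesis by simp
  qed
qed

lemma mono_z_pow: "(mnm (0,0,1) :: 'k::comm_ring_1 poly poly poly) ^ k = mnm (0,0,k)"
  by (induction k) (auto simp: mono_0 mono_mult)

lemma mono_z_pow': "(mnm (0,0,Suc 0) :: 'k::comm_ring_1 poly poly poly) ^ k = mnm (0,0,k)"
  using mono_z_pow by simp

lemma PLx_pow_mult:
  "PLx L ^ t * F = (\<Sum>k\<le>t. mnm (0,0,k) * (Cst (of_nat (t choose k) * L (0,0,1) ^ k) * (ell L ^ (t - k) * F)))"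
proof -
  have "PLx L ^ t = (\<Sum>k\<le>t. of_nat (t choose k) * (Cst (L (0,0,1)) * mnm (0,0,1)) ^ k * ell L ^ (t - k))"
    unfolding PLx_def by (rule binomial_ring)
  then have "PLx L ^ t * F = (\<Sum>k\<le>t. of_nat (t choose k) * (Cst (L (0,0,1)) * mnm (0,0,1)) ^ k * ell L ^ (t - k) * F)"
    by (simp add: sum_distrib_right)
  also have "\<dots> = (\<Sum>k\<le>t. mnm (0,0,k) * (Cst (of_nat (t choose k) * L (0,0,1) ^ k) * (ell L ^ (t - k) * F)))"
    by (rule sum.cong[OF refl])
       (simp add: power_mult_distrib Cst_power mono_z_pow mono_z_pow' Cst_of_nat Cst_mult[symmetric] ac_simps)
  finally show ?thesis .
qed

lemma prj_monoz_kill: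
  assumes "c \<le> k"
  shows "prj S (mnm (0,0,k) * G) = 0"
proof
  fix m :: mon3
  obtain i j l where m: "m = (i,j,l)" by (cases m)
  show "prj S (mnm (0,0,k) * G) m = 0 m"
    using zbound[of i j l] assms by (auto simp: prj_def m cf_monoz_mult)
qed

lemma qpow_L:
  assumes "L \<in> graded S 1"
  shows "qpow S L t = prj S (PLx L ^ t)"
  using qpow_prj[OF dcl zeroS, of "PLx L" t] prj_PLx[OF assms] by simp

lemma T_prj:
  assumes "L \<in> graded S 1"
  shows "qmult S (qpow S L t) (prj S F) = prj S (PLx L ^ t * F)"
  by (simp add: qpow_L[OF assms] qmult_prj[OF dcl])

lemma T_graded:
  assumes "L \<in> graded S 1" "f \<in> graded S i"
  shows "qmult S (qpow S L t) f \<in> graded S (i + t)"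
proof -
  have fs: "f \<in> supp_in S" using assms(2) by (auto simp: graded_def supp_in_def)
  have "qmult S (qpow S L t) f = prj S (PLx L ^ t * lift S f)"
    using T_prj[OF assms(1), of t "lift S f"] prj_lift[OF finS fs] by simp
  moreover have "hom (t * 1 + i) (PLx L ^ t * lift S f)"
  proof (rule hom_mult)
    have "hom 1 (PLx L)"
      unfolding PLx_def
      by (intro hom_add hom_Cst_mult hom_ell hom_mono1)
    then show "hom (t * 1) (PLx L ^ t)" by (rule hom_power)
    show "hom i (lift S f)"
      using assms(2) by (intro hom_lift[OF finS]) (auto simp: graded_eq Sd_def)
  qed
  ultimately show ?thesis using prj_hom by (auto simp: graded_eq Sd_def add.commute)
qed

end

context Salg begin

lemma zero_graded: "0 \<in> graded S d"
  by (simp add: graded_def)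

lemma dl_graded: "m \<in> Sd d \<Longrightarrow> dl m \<in> graded S d"
  by (simp add: graded_eq dl_in_supp)

lemma span_sub_span: "A \<subseteq> fv.span B \<Longrightarrow> fv.span A \<subseteq> fv.span B"
  by (metis fv.span_mono fv.span_span)

lemma Phi_img:
  fixes L :: "mon3 \<Rightarrow> 'k::field"
  assumes "m \<in> Mz i"
  shows "qmult S (prj S (ell L ^ s)) (dl m) \<in> fv.span (dl ` Mz (i + s))"
proof -
  obtain p q r where m: "m = (p,q,r)" by (cases m)
  have r0: "r = 0" and mS: "m \<in> S" and md: "mdeg m = i" using assms m by (auto simp: Mz_def)
  have "qmult S (prj S (ell L ^ s)) (dl m) = qmult S (prj S (ell L ^ s)) (prj S (mnm m))"
    by (simp add: prj_mono[OF mS])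
  also have "\<dots> = prj S (ell L ^ s * mnm m)" by (rule qmult_prj[OF dcl])
  finally have "qmult S (prj S (ell L ^ s)) (dl m) = prj S (ell L ^ s * mnm m)" .
  moreover have "hom (s * 1 + i) (ell L ^ s * mnm m)"
    using hom_mult[OF hom_power[OF hom_ell] hom_mono[of m]] md by simp
  moreover have "zfree (ell L ^ s * mnm m)"
    using zfree_mult[OF zfree_power[OF zfree_ell] zfree_mono[of p q]] m r0 by simp
  ultimately have "qmult S (prj S (ell L ^ s)) (dl m) \<in> supp_in (Mz (i + s))"
    using prj_hom_zfree[of "s * 1 + i" "ell L ^ s * mnm m" S] by (simp add: Mz_def add.commute)
  moreover have "fv.span (dl ` Mz (i + s)) = (supp_in (Mz (i + s)) :: (mon3 \<Rightarrow> 'k) set)"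
    by (rule span_dl[OF finite_Mz])
  ultimately show ?thesis by simp
qed

lemma core_III:
  fixes L :: "mon3 \<Rightarrow> 'k::field"
  assumes L: "L \<in> graded S 1" and ct: "c \<le> t"
    and hM: "card (Mz (i + (t + 1 - c))) < card (Mz i)"
    and hS: "card (Sd i) \<le> card (Sd (i + t))"
  shows "\<not> inj_on (qmult S (qpow S L t)) (graded S i) \<and>
         qmult S (qpow S L t) ` graded S i \<noteq> graded S (i + t)"
proof -
  define s where "s = t + 1 - c"
  define T where "T = qmult S (qpow S L t)"
  define Phi where "Phi = qmult S (prj S (ell L ^ s))"
  have linT: "Vector_Spaces.linear scl scl T" unfolding T_def by (rule linear_qmult)
  have linP: "Vector_Spaces.linear scl scl Phi" unfolding Phi_def by (rule linear_qmult)
  have img: "Phi ` dl ` Mz i \<subseteq> fv.span (dl ` Mz (i + s))"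
    unfolding Phi_def using Phi_img by blast
  have cardlt: "card (dl ` Mz (i + s) :: (mon3 \<Rightarrow> 'k) set) < card (dl ` Mz i :: (mon3 \<Rightarrow> 'k) set)"
    using hM by (simp add: card_dl s_def)
  obtain f where f: "f \<in> fv.span (dl ` Mz i)" "f \<noteq> 0" "Phi f = 0"
    using ker_exists[OF finite_imageI[OF finite_Mz] independent_dl finite_imageI[OF finite_Mz] cardlt linP img]
    by blast
  have fg: "f \<in> graded S i" using f(1) Mz_span_sub by blast
  have fS: "f \<in> supp_in S" using fg by (auto simp: graded_def supp_in_def)
  define F where "F = lift S f"
  have pF: "prj S F = f" unfolding F_def by (rule prj_lift[OF finS fS])
  have pellF: "prj S (ell L ^ s * F) = 0"
    using f(3) pF qmult_prj[OF dcl, of "ell L ^ s" F] by (simp add: Phi_def)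
  have "T f = prj S (PLx L ^ t * F)" using T_prj[OF L, of t F] pF by (simp add: T_def)
  also have "\<dots> = (\<Sum>k\<le>t. prj S (mnm (0,0,k) * (Cst (of_nat (t choose k) * L (0,0,1) ^ k) * (ell L ^ (t - k) * F))))"
    by (simp add: PLx_pow_mult prj_sum)
  also have "\<dots> = 0"
  proof (rule sum.neutral, intro ballI)
    fix k assume k: "k \<in> {..t}"
    show "prj S (mnm (0,0,k) * (Cst (of_nat (t choose k) * L (0,0,1) ^ k) * (ell L ^ (t - k) * F))) = 0"
    proof (cases "c \<le> k")
      case True
      then show ?thesis by (rule prj_monoz_kill)
    next
      case False
      then have tk: "t - k = (t - k - s) + s" using s_def ct by auto
      define G where "G = mnm (0,0,k) * Cst (of_nat (t choose k) * L (0,0,1) ^ k) * ell L ^ (t - k - s)"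
      have eq: "mnm (0,0,k) * (Cst (of_nat (t choose k) * L (0,0,1) ^ k) * (ell L ^ (t - k) * F)) = G * (ell L ^ s * F)"
        unfolding G_def by (subst tk) (simp add: power_add ac_simps)
      have "prj S (G * (ell L ^ s * F)) = qmult S (prj S G) (prj S (ell L ^ s * F))"
        by (rule qmult_prj[OF dcl, symmetric])
      also have "\<dots> = 0" using pellF by (simp add: qmult_zero2)
      finally show ?thesis by (simp only: eq)
    qed
  qed
  finally have Tf: "T f = 0" .
  have T0: "T 0 = 0" by (simp add: T_def qmult_zero2)
  have notinj: "\<not> inj_on T (graded S i)"
  proof
    assume inj: "inj_on T (graded S i)"
    have "T f = T 0" using Tf T0 by simp
    then have "f = 0" by (rule inj_onD[OF inj _ fg zero_graded])
    then show False using f(2) by simp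
  qed
  have notsurj: "T ` graded S i \<noteq> graded S (i + t)"
  proof
    assume surj: "T ` graded S i = graded S (i + t)"
    have fsum: "f = (\<Sum>m\<in>Sd i. scl (f m) (dl m))"
      using sum_dl_expand[OF finite_Sd] fg graded_eq by blast
    have "\<exists>m0. f m0 \<noteq> 0"
    proof (rule ccontr)
      assume "\<not> (\<exists>m0. f m0 \<noteq> 0)"
      then have "f = 0" by (auto simp: fun_eq_iff)
      with f(2) show False by simp
    qed
    then obtain m0 where m0: "f m0 \<noteq> 0" by blast
    then have m0S: "m0 \<in> Sd i" using fg unfolding graded_eq supp_in_def by blast
    have "T f = (\<Sum>m\<in>Sd i. scl (f m) (T (dl m)))"
      by (subst fsum) (simp add: fvp.linear_sum[OF linT] fvp.linear_scale[OF linT])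
    then have sum0: "(\<Sum>m\<in>Sd i. scl (f m) (T (dl m))) = 0" using Tf by simp
    define R where "R = (\<Sum>m\<in>Sd i - {m0}. scl (f m) (T (dl m)))"
    have "scl (f m0) (T (dl m0)) + R = 0"
      using sum0 sum.remove[OF finite_Sd m0S, of "\<lambda>m. scl (f m) (T (dl m))"] R_def by simp
    then have e1: "scl (f m0) (T (dl m0)) = - R" by (simp add: eq_neg_iff_add_eq_0)
    have Tm0: "T (dl m0) = scl (inverse (f m0)) (- R)"
    proof
      fix x
      have "f m0 * T (dl m0) x = - R x" using fun_cong[OF e1, of x] by (simp add: scl_def)
      then show "T (dl m0) x = scl (inverse (f m0)) (- R) x"
        using m0 by (simp add: scl_def field_simps)
    qed
    have Rspan: "R \<in> fv.span (T ` dl ` (Sd i - {m0}))"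
      unfolding R_def by (rule fv.span_sum, rule fv.span_scale, rule fv.span_base, blast)
    have sub: "T ` dl ` Sd i \<subseteq> fv.span (T ` dl ` (Sd i - {m0}))"
    proof
      fix x assume "x \<in> T ` dl ` Sd i"
      then obtain m where m: "m \<in> Sd i" "x = T (dl m)" by blast
      show "x \<in> fv.span (T ` dl ` (Sd i - {m0}))"
      proof (cases "m = m0")
        case True
        have "scl (inverse (f m0)) (- R) \<in> fv.span (T ` dl ` (Sd i - {m0}))"
          by (rule fv.span_scale[OF fv.span_neg[OF Rspan]])
        then show ?thesis using m True Tm0 by simp
      next
        case False
        then show ?thesis using m by (intro fv.span_base) blast
      qed
    qed
    have gs: "graded S i = (fv.span (dl ` Sd i) :: (mon3 \<Rightarrow> 'k) set)" by (rule graded_span)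
    have "graded S (i + t) = T ` fv.span (dl ` Sd i)" using surj gs by simp
    also have "\<dots> = fv.span (T ` dl ` Sd i)" using fvp.linear_span_image[OF linT] by simp
    also have "\<dots> \<subseteq> fv.span (T ` dl ` (Sd i - {m0}))" by (rule span_sub_span[OF sub])
    finally have "dl ` Sd (i + t) \<subseteq> fv.span (T ` dl ` (Sd i - {m0}))"
      using dl_graded by blast
    then have "card (dl ` Sd (i + t) :: (mon3 \<Rightarrow> 'k) set) \<le> card (T ` dl ` (Sd i - {m0}))"
      using fv.independent_span_bound[OF finite_imageI[OF finite_imageI[OF finite_Diff[OF finite_Sd]]] independent_dl]
      by blast
    also have "\<dots> \<le> card (dl ` (Sd i - {m0}) :: (mon3 \<Rightarrow> 'k) set)"
      by (rule card_image_le[OF finite_imageI[OF finite_Diff[OF finite_Sd]]])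
    also have "\<dots> = card (Sd i) - 1" by (simp add: card_dl m0S finite_Sd)
    finally have "card (Sd (i + t)) \<le> card (Sd i) - 1" by (simp add: card_dl)
    moreover have "0 < card (Sd i)" using m0S finite_Sd[of i] by (auto simp: card_gt_0_iff)
    ultimately show False using hS by simp
  qed
  show ?thesis using notinj notsurj by (simp add: T_def)
qed

end

context Salg begin

definition Pr :: "(mon3 \<Rightarrow> 'k::field) \<Rightarrow> (mon3 \<Rightarrow> 'k)" where
  "Pr g = (\<lambda>m. case m of (p,q,l) \<Rightarrow> if l = 0 then g (p,q,c-1) else 0)"

lemma linear_Pr: "Vector_Spaces.linear scl scl Pr"
  unfolding lin_iff by (auto simp: Pr_def fun_eq_iff scl_def split: prod.splits)

lemma c_pos: "0 < c" using zbound[of 0 0 0] zeroS by simp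

lemma PrZ:
  assumes "zfree G"
  shows "Pr (prj S (mnm (0,0,w) * G)) = (if w = c - 1 then prj S G else 0)"
proof
  fix m :: mon3
  obtain p q l where m: "m = (p,q,l)" by (cases m)
  have zf: "\<And>l'. l' \<noteq> 0 \<Longrightarrow> cf G (p,q,l') = 0" using assms unfolding zfree_def by blast
  have mem: "(p,q,c-1) \<in> S \<longleftrightarrow> (p,q,0) \<in> S" using zunif[of "c-1" 0 p q] c_pos by simp
  show "Pr (prj S (mnm (0,0,w) * G)) m = (if w = c - 1 then prj S G else 0) m"
  proof (cases "l = 0")
    case True
    then show ?thesis using m mem zf[of "c - 1 - w"]
      by (auto simp: Pr_def prj_def cf_monoz_mult)
  next
    case False
    then show ?thesis using m zf[of l] by (auto simp: Pr_def prj_def)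
  qed
qed

lemma Pr_dl: "Pr (dl (p,q,c-1)) = dl (p,q,0)"
  by (auto simp: Pr_def dl_def fun_eq_iff split: prod.splits)

lemma PrT_span:
  fixes L :: "mon3 \<Rightarrow> 'k::field"
  assumes L: "L \<in> graded S 1" and ct: "c \<le> t" and m: "m \<in> Sd i"
  shows "Pr (qmult S (qpow S L t) (dl m)) \<in> fv.span (qmult S (prj S (ell L ^ (t + 1 - c))) ` dl ` Mz i)"
proof -
  define s where "s = t + 1 - c"
  define Phi where "Phi = qmult S (prj S (ell L ^ s))"
  obtain p q r where mpqr: "m = (p,q,r)" by (cases m)
  have mS: "m \<in> S" and md: "p + q + r = i" using m mpqr by (auto simp: Sd_def mdeg_def)
  have rc: "r < c" using zbound mS mpqr by blast
  define G where "G = (\<lambda>k. Cst (of_nat (t choose k) * L (0,0,1) ^ k) * (ell L ^ (t - k) * mnm (p,q,0)))"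
  have zG: "zfree (G k)" for k
    unfolding G_def by (intro zfree_Cst_mult zfree_mult zfree_power zfree_ell zfree_mono)
  have "mnm (0,0,r) * (mnm (p,q,0) :: 'k poly poly poly) = mnm m"
    by (simp add: mono_mult mpqr)
  then have mm: "mnm m = mnm (0,0,r) * (mnm (p,q,0) :: 'k poly poly poly)" by simp
  have "qmult S (qpow S L t) (dl m) = prj S (PLx L ^ t * mnm m)"
    using T_prj[OF L, of t "mnm m"] by (simp add: prj_mono[OF mS])
  also have "\<dots> = (\<Sum>k\<le>t. prj S (mnm (0,0,k) * (Cst (of_nat (t choose k) * L (0,0,1) ^ k) * (ell L ^ (t - k) * mnm m))))"
    by (simp add: PLx_pow_mult prj_sum)
  also have "\<dots> = (\<Sum>k\<le>t. prj S (mnm (0,0,k + r) * G k))"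
  proof (rule sum.cong[OF refl])
    fix k
    have e1: "mnm (0,0,k) * mnm (0,0,r) = (mnm (0,0,k+r) :: 'k poly poly poly)"
      by (simp add: mono_mult)
    have "mnm (0,0,k) * (Cst (of_nat (t choose k) * L (0,0,1) ^ k) * (ell L ^ (t - k) * mnm m)) =
          (mnm (0,0,k) * mnm (0,0,r)) * G k"
      unfolding G_def mm by (simp add: ac_simps)
    then show "prj S (mnm (0,0,k) * (Cst (of_nat (t choose k) * L (0,0,1) ^ k) * (ell L ^ (t - k) * mnm m))) =
          prj S (mnm (0,0,k + r) * G k)"
      unfolding e1 by simp
  qed
  finally have eqT: "qmult S (qpow S L t) (dl m) = (\<Sum>k\<le>t. prj S (mnm (0,0,k + r) * G k))" .
  have "Pr (qmult S (qpow S L t) (dl m)) = (\<Sum>k\<le>t. Pr (prj S (mnm (0,0,k + r) * G k)))"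
    unfolding eqT by (rule fvp.linear_sum[OF linear_Pr])
  also have "\<dots> = (\<Sum>k\<le>t. if k = c - 1 - r then prj S (G k) else 0)"
    by (rule sum.cong[OF refl]) (use rc in \<open>auto simp: PrZ[OF zG]\<close>)
  also have "\<dots> = prj S (G (c - 1 - r))"
    using ct rc by simp
  finally have eqP: "Pr (qmult S (qpow S L t) (dl m)) = prj S (G (c - 1 - r))" .
  define H where "H = ell L ^ r * mnm (p,q,0)"
  have tk: "t - (c - 1 - r) = s + r" using ct rc s_def by simp
  have "G (c - 1 - r) = Cst (of_nat (t choose (c-1-r)) * L (0,0,1) ^ (c-1-r)) * (ell L ^ s * H)"
    unfolding G_def H_def tk by (simp add: power_add ac_simps)
  then have "prj S (G (c - 1 - r)) = scl (of_nat (t choose (c-1-r)) * L (0,0,1) ^ (c-1-r)) (prj S (ell L ^ s * H))"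
    by (simp add: prj_Cst_mult)
  also have "prj S (ell L ^ s * H) = Phi (prj S H)"
    unfolding Phi_def by (rule qmult_prj[OF dcl, symmetric])
  finally have eqG: "prj S (G (c - 1 - r)) = scl (of_nat (t choose (c-1-r)) * L (0,0,1) ^ (c-1-r)) (Phi (prj S H))" .
  have "hom (r * 1 + (p + q + 0)) H"
    unfolding H_def using hom_mult[OF hom_power[OF hom_ell] hom_mono[of "(p,q,0)"]] by (simp add: mdeg_def)
  moreover have "zfree H" unfolding H_def by (intro zfree_mult zfree_power zfree_ell zfree_mono)
  ultimately have "prj S H \<in> supp_in (Mz i)"
    using prj_hom_zfree[of "r * 1 + (p + q + 0)" H S] md by (simp add: Mz_def add.commute)
  moreover have "fv.span (dl ` Mz i) = (supp_in (Mz i) :: (mon3 \<Rightarrow> 'k) set)"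
    by (rule span_dl[OF finite_Mz])
  ultimately have "prj S H \<in> fv.span (dl ` Mz i)" by simp
  then have "Phi (prj S H) \<in> Phi ` fv.span (dl ` Mz i)" by blast
  also have "\<dots> = fv.span (Phi ` dl ` Mz i)"
    using fvp.linear_span_image[OF linear_qmult[of S "prj S (ell L ^ s)"]] by (simp add: Phi_def)
  finally have "Phi (prj S H) \<in> fv.span (Phi ` dl ` Mz i)" .
  then show ?thesis using eqP eqG fv.span_scale by (simp add: Phi_def s_def)
qed

lemma core_IV:
  fixes L :: "mon3 \<Rightarrow> 'k::field"
  assumes L: "L \<in> graded S 1" and ct: "c \<le> t"
    and hM: "card (Mz i) < card (Mz (i + (t + 1 - c)))"
    and hS: "card (Sd (i + t)) \<le> card (Sd i)"
  shows "\<not> inj_on (qmult S (qpow S L t)) (graded S i) \<and>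
         qmult S (qpow S L t) ` graded S i \<noteq> graded S (i + t)"
proof -
  define s where "s = t + 1 - c"
  define e where "e = i + s"
  define T where "T = qmult S (qpow S L t)"
  define Phi where "Phi = qmult S (prj S (ell L ^ s))"
  have linT: "Vector_Spaces.linear scl scl T" unfolding T_def by (rule linear_qmult)
  have linPT: "Vector_Spaces.linear scl scl (Pr \<circ> T)"
    by (rule Vector_Spaces.linear_compose[OF linT linear_Pr])
  have gs: "graded S i = (fv.span (dl ` Sd i) :: (mon3 \<Rightarrow> 'k) set)" by (rule graded_span)
  have sub1: "(Pr \<circ> T) ` dl ` Sd i \<subseteq> fv.span (Phi ` dl ` Mz i)"
    using PrT_span[OF L ct] by (auto simp: T_def Phi_def s_def)
  have PrT_all: "Pr (T g) \<in> fv.span (Phi ` dl ` Mz i)" if g: "g \<in> graded S i" for g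
  proof -
    have "(Pr \<circ> T) g \<in> (Pr \<circ> T) ` fv.span (dl ` Sd i)" using g gs by blast
    also have "\<dots> = fv.span ((Pr \<circ> T) ` dl ` Sd i)" using fvp.linear_span_image[OF linPT] by simp
    also have "\<dots> \<subseteq> fv.span (Phi ` dl ` Mz i)" by (rule span_sub_span[OF sub1])
    finally show ?thesis by simp
  qed
  have notsurj: "T ` graded S i \<noteq> graded S (i + t)"
  proof
    assume surj: "T ` graded S i = graded S (i + t)"
    have "dl ` Mz e \<subseteq> fv.span (Phi ` dl ` Mz i)"
    proof
      fix x :: "mon3 \<Rightarrow> 'k" assume "x \<in> dl ` Mz e"
      then obtain m' where m': "m' \<in> Mz e" "x = dl m'" by blast
      obtain p q l where "m' = (p,q,l)" by (cases m')
      then have pq: "(p,q,l) \<in> Mz e" "x = dl (p,q,l)" using m' by auto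
      then have l0: "l = 0" and pqS: "(p,q,0) \<in> S" and pqd: "p + q = e" by (auto simp: Mz_def mdeg_def)
      have "(p,q,c-1) \<in> S" using zunif[of "c-1" 0 p q] c_pos pqS by simp
      moreover have "mdeg (p,q,c-1) = i + t" using pqd ct c_pos by (simp add: mdeg_def e_def s_def)
      ultimately have "dl (p,q,c-1) \<in> graded S (i + t)" by (intro dl_graded) (simp add: Sd_def)
      then obtain g where g: "g \<in> graded S i" "T g = dl (p,q,c-1)" using surj by force
      have "Pr (T g) = Pr (dl (p,q,c-1))" using g by simp
      also have "\<dots> = dl (p,q,0)" by (rule Pr_dl)
      finally have "Pr (T g) = x" using pq l0 by simp
      then show "x \<in> fv.span (Phi ` dl ` Mz i)" using PrT_all[OF g(1)] by simp
    qed
    then have "card (dl ` Mz e :: (mon3 \<Rightarrow> 'k) set) \<le> card (Phi ` dl ` Mz i)"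
      using fv.independent_span_bound[OF finite_imageI[OF finite_imageI[OF finite_Mz]] independent_dl] by blast
    also have "\<dots> \<le> card (dl ` Mz i :: (mon3 \<Rightarrow> 'k) set)"
      by (rule card_image_le[OF finite_imageI[OF finite_Mz]])
    finally show False using hM by (simp add: card_dl e_def s_def)
  qed
  have notinj: "\<not> inj_on T (graded S i)"
  proof
    assume inj: "inj_on T (graded S i)"
    define B where "B = T ` dl ` Sd i"
    have indB: "fv.independent B"
      unfolding B_def by (rule fvp.linear_independent_injective_image[OF linT independent_dl]) (use inj gs in simp)
    have "inj_on T (dl ` Sd i)" using inj by (rule inj_on_subset) (auto intro: dl_graded)
    then have cardB: "card B = card (Sd i)" unfolding B_def by (simp add: card_image card_dl)
    have finB: "finite B" unfolding B_def using finite_Sd by simp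
    define V :: "(mon3 \<Rightarrow> 'k) set" where "V = graded S (i + t)"
    have Vs: "V = (fv.span (dl ` Sd (i + t)) :: (mon3 \<Rightarrow> 'k) set)" unfolding V_def by (rule graded_span)
    have BV: "B \<subseteq> V" unfolding B_def V_def T_def using T_graded[OF L] dl_graded by blast
    have "V \<subseteq> fv.span B"
    proof
      fix v assume v: "v \<in> V"
      show "v \<in> fv.span B"
      proof (rule ccontr)
        assume nv: "v \<notin> fv.span B"
        have ind: "fv.independent (insert v B)" by (rule fv.independent_insertI[OF nv indB])
        have "insert v B \<subseteq> fv.span (dl ` Sd (i + t))" using v BV Vs by auto
        then have "card (insert v B) \<le> card (dl ` Sd (i + t) :: (mon3 \<Rightarrow> 'k) set)"
          using fv.independent_span_bound[OF finite_imageI[OF finite_Sd] ind] by blast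
        moreover have "v \<notin> B" using nv fv.span_base by blast
        then have "card (insert v B) = card B + 1" using finB by simp
        ultimately show False using cardB hS by (simp add: card_dl)
      qed
    qed
    also have "fv.span B = T ` graded S i"
      unfolding B_def gs using fvp.linear_span_image[OF linT] by simp
    finally have "V \<subseteq> T ` graded S i" .
    moreover have "T ` graded S i \<subseteq> V" unfolding V_def T_def using T_graded[OF L] by blast
    ultimately show False using notsurj V_def by blast
  qed
  show ?thesis using notinj notsurj by (simp add: T_def)
qed

end

declare [[smt_timeout = 600]]
definition bx :: "int \<Rightarrow> int \<Rightarrow> int \<Rightarrow> int" where
  "bx p q x = max 0 (min (x+1) (min p (min q (p+q-1-x))))"

lemma bx_neg: "x < 0 \<Longrightarrow> bx p q x = 0"
  unfolding bx_def by simp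

lemma bx_nonneg: "0 \<le> bx p q x"
  unfolding bx_def by simp

lemma top_pos:
  fixes p1 p2 X Y :: int
  assumes "p1 \<ge> 1" "p2 \<ge> 1" "Y \<ge> 1" "X \<ge> Y"
  shows "bx (p1+X) p2 (p1+p2+X-2) + bx p1 Y (p1+p2+X-2 - p2) \<ge> 1"
  using assms unfolding bx_def by (smt (verit))

lemma above_zero:
  fixes p1 p2 X Y d :: int
  assumes "p1 \<ge> 1" "p2 \<ge> 1" "Y \<ge> 1" "X \<ge> Y" "d > p1+p2+X-2"
  shows "bx (p1+X) p2 d + bx p1 Y (d - p2) = 0"
  using assms unfolding bx_def by (smt (verit))

lemma sign_pos:
  fixes p1 p2 X Y k :: int
  assumes "p1 \<ge> 1" "p2 \<ge> 1" "Y \<ge> 1" "X \<ge> Y" "X - Y \<le> p2" "2*k \<le> p1+p2+X-2"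
  shows "bx (p1+X) p2 k + bx p1 Y (k - p2) \<le> bx (p1+X) p2 (p1+p2+X-2-k) + bx p1 Y (p1+p2+X-2-k - p2)"
  using assms unfolding bx_def by (smt (verit))

lemma sign_neg:
  fixes p1 p2 X Y k :: int
  assumes "p1 \<ge> 1" "p2 \<ge> 1" "Y \<ge> 1" "X \<ge> Y" "X - Y \<ge> p2" "2*k \<le> p1+p2+X-2"
  shows "bx (p1+X) p2 k + bx p1 Y (k - p2) \<ge> bx (p1+X) p2 (p1+p2+X-2-k) + bx p1 Y (p1+p2+X-2-k - p2)"
  using assms unfolding bx_def by (smt (verit))

lemma gform:
  fixes p1 p2 X Y k :: int
  assumes "p1 \<ge> 1" "p2 \<ge> 1" "Y \<ge> 1" "X \<ge> Y" "2*k \<le> p1+p2+X-2"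
  shows "(bx (p1+X) p2 k + bx p1 Y (k - p2)) - (bx (p1+X) p2 (p1+p2+X-2+1-k) + bx p1 Y (p1+p2+X-2+1-k - p2))
    = (if 0 \<le> k \<and> k < min (p1+X) p2 then 1 else 0) + bx p1 Y (k - p2) - bx p1 Y (k - (X-Y+1))"
  using assms unfolding bx_def by (smt (verit))

lemma g'form:
  fixes p1 p2 X Y k :: int
  assumes "p1 \<ge> 1" "p2 \<ge> 1" "Y \<ge> 1" "X \<ge> Y" "2*k \<le> p1+p2+X-2-2"
  shows "(bx (p1+X) p2 (p1+p2+X-2-1-k) + bx p1 Y (p1+p2+X-2-1-k - p2)) - (bx (p1+X) p2 k + bx p1 Y (k - p2))
    = (if 0 \<le> k+1 \<and> k+1 < min (p1+X) p2 then 1 else 0) + bx p1 Y (k+1-(X-Y)) - bx p1 Y (k - p2)"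
  using assms unfolding bx_def by (smt (verit))

lemma locA:
  fixes al be A B i :: int
  assumes "al \<ge> 1" "be \<ge> 1" "B \<ge> 1" "A \<ge> B" "2*i \<le> al+be+A-2"
  defines "g \<equiv> \<lambda>k. (if 0 \<le> k \<and> k < min (al+A) be then 1 else 0) + bx al B (k-be) - bx al B (k-(A-B+1))"
  assumes "g i < 0" "g (i-1) \<ge> 0" "g (i-2) \<ge> 0"
  shows "g i + g (i-1) + g (i-2) \<ge> 0"
  using assms unfolding g_def bx_def by (smt (verit))

lemma locB:
  fixes al be A B i :: int
  assumes "al \<ge> 1" "be \<ge> 1" "B \<ge> 1" "A \<ge> B" "2*i < al+be+A-3"
  defines "g \<equiv> \<lambda>k. (if 0 \<le> k+1 \<and> k+1 < min (al+A) be then 1 else 0) + bx al B (k+1-(A-B)) - bx al B (k-be)"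
  assumes "g i < 0" "g (i-1) \<ge> 0" "g (i-2) \<ge> 0"
  shows "g i + g (i-1) + g (i-2) \<ge> 0"
  using assms unfolding g_def bx_def by (smt (verit))

lemma window_sum:
  fixes g :: "int \<Rightarrow> int" and i :: int and c :: nat
  assumes c3: "c \<ge> 3" and rest: "\<And>r. 3 \<le> r \<Longrightarrow> r < c \<Longrightarrow> g (i - int r) \<ge> 0"
    and loc: "g i + g (i-1) + g (i-2) \<ge> 0"
  shows "(\<Sum>r<c. g (i - int r)) \<ge> 0"
proof -
  have un: "{..<c} = {..<3} \<union> {3..<c}" using c3 by auto
  have "(\<Sum>r<c. g (i - int r)) = (\<Sum>r<3. g (i - int r)) + (\<Sum>r\<in>{3..<c}. g (i - int r))"
    unfolding un by (rule sum.union_disjoint) auto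
  moreover have "(\<Sum>r<3. g (i - int r)) = g i + g (i-1) + g (i-2)"
    by (simp add: numeral_3_eq_3 lessThan_Suc)
  moreover have "(\<Sum>r\<in>{3..<c}. g (i - int r)) \<ge> 0"
    by (rule sum_nonneg) (use rest in auto)
  ultimately show ?thesis using loc by simp
qed

lemma sum_rev:
  fixes F :: "int \<Rightarrow> int" and e :: int and c :: nat
  shows "(\<Sum>r<c. F (e + int c - 1 - int r)) = (\<Sum>r<c. F (e + int r))"
proof -
  have "(\<Sum>r<c. F (e + int c - 1 - int r)) = (\<Sum>r<c. (\<lambda>r. F (e + int r)) (c - Suc r))"
    by (rule sum.cong) (auto simp: of_nat_diff algebra_simps)
  also have "\<dots> = (\<Sum>r<c. F (e + int r))" by (rule sum.nat_diff_reindex)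
  finally show ?thesis .
qed

lemma div2_iff: "(i \<le> D div 2) \<longleftrightarrow> (2 * i \<le> (D::int))"
  by presburger

lemma comb_main:
  fixes h :: "int \<Rightarrow> nat" and p1 p2 X Y :: int and c :: nat
  assumes p: "p1 \<ge> 1" "p2 \<ge> 1" "Y \<ge> 1" "X \<ge> Y" and c3: "c \<ge> 3"
    and hf: "\<And>d. int (h d) = bx (p1+X) p2 d + bx p1 Y (d - p2)"
    and nac: "\<not> almost_centered h"
  shows "\<exists>i e::int. 0 \<le> i \<and> i < e \<and>
     ((h e < h i \<and> (\<Sum>r<c. int (h (i - int r))) \<le> (\<Sum>r<c. int (h (e + int c - 1 - int r)))) \<or>
      (h i < h e \<and> (\<Sum>r<c. int (h (e + int c - 1 - int r))) \<le> (\<Sum>r<c. int (h (i - int r)))))"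
proof -
  define D where "D = p1+p2+X-2"
  define H where "H d = int (h d)" for d
  have Hf: "H d = bx (p1+X) p2 d + bx p1 Y (d - p2)" for d using hf H_def by simp
  have Hneg: "H d = 0" if "d < 0" for d
    using Hf[of d] bx_neg[OF that] bx_neg[of "d - p2"] that p by simp
  have Habove: "H d = 0" if "d > D" for d
    using Hf[of d] above_zero[OF p, of d] that D_def by simp
  have HD: "H D \<ge> 1" using Hf[of D] top_pos[OF p] D_def by simp
  have sd: "socdeg h = D"
    unfolding socdeg_def
  proof (rule Greatest_equality)
    show "h D \<noteq> 0" using HD H_def by auto
  next
    fix y assume "h y \<noteq> 0"
    then show "y \<le> D" using Habove[of y] H_def by force
  qed
  have nac': "\<not> ((\<forall>i. 0 \<le> i \<and> 2*i \<le> D \<longrightarrow> H (i-1) \<le> H (D-i) \<and> H (D-i) \<le> H i) \<or>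
                (\<forall>i. 0 \<le> i \<and> 2*i \<le> D \<longrightarrow> H (D-i+1) \<le> H i \<and> H i \<le> H (D-i)))"
    using nac unfolding almost_centered_def Let_def sd div2_iff H_def by simp
  have sumeq: "(\<Sum>r<c. H (e + int c - 1 - int r)) = (\<Sum>r<c. H (e + int r))" for e
    by (rule sum_rev)
  show ?thesis
  proof (cases "X - Y \<le> p2")
    case True
    have sgn: "H i \<le> H (D - i)" if "2*i \<le> D" for i
      using sign_pos[OF p True, of i] that Hf[of i] Hf[of "D - i"] D_def by simp
    from nac' obtain i1 where i1: "0 \<le> i1" "2*i1 \<le> D" "\<not> (H (D-i1+1) \<le> H i1 \<and> H i1 \<le> H (D-i1))"
      by blast
    then have i1': "H i1 < H (D + 1 - i1)" using sgn[of i1] by (simp add: algebra_simps)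
    define P where "P n \<longleftrightarrow> 2 * int n \<le> D \<and> H (int n) < H (D + 1 - int n)" for n :: nat
    have Pex: "P (nat i1)" using i1 i1' by (simp add: P_def)
    define n0 where "n0 = (LEAST n. P n)"
    have Pn0: "P n0" using Pex unfolding n0_def by (rule LeastI)
    have notP: "\<not> P n" if "n < n0" for n using not_less_Least[of n P] that n0_def by blast
    define g where "g k = H k - H (D + 1 - k)" for k
    define i where "i = int n0"
    have i0: "0 \<le> i" unfolding i_def by simp
    have i2: "2*i \<le> D" and gi: "g i < 0" using Pn0 by (auto simp: P_def g_def i_def)
    have gge: "g k \<ge> 0" if "k < i" for k
    proof (cases "k < 0")
      case True
      then show ?thesis using Hneg[of k] Habove[of "D + 1 - k"] by (simp add: g_def)
    next
      case False
      then obtain n where n: "k = int n" by (metis nonneg_int_cases not_less)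
      then have "n < n0" using that i_def by simp
      then have "\<not> P n" by (rule notP)
      moreover have "2 * int n \<le> D" using i2 that n by simp
      ultimately show ?thesis by (auto simp: P_def g_def n)
    qed
    have ggeq: "g k = (if 0 \<le> k \<and> k < min (p1+X) p2 then 1 else 0) + bx p1 Y (k - p2) - bx p1 Y (k - (X-Y+1))"
      if "2*k \<le> D" for k
      using gform[OF p, of k] that Hf[of k] Hf[of "D + 1 - k"] by (simp add: g_def D_def algebra_simps)
    have loc: "g i + g (i-1) + g (i-2) \<ge> 0"
      using locA[OF p, of i] i2 gi gge[of "i-1"] gge[of "i-2"] ggeq[of i] ggeq[of "i-1"] ggeq[of "i-2"]
      by (simp add: D_def)
    have win: "(\<Sum>r<c. g (i - int r)) \<ge> 0"
      by (rule window_sum[OF c3 _ loc]) (use gge in auto)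
    have "(\<Sum>r<c. H (i - int r)) - (\<Sum>r<c. H ((D + 1 - i) + int c - 1 - int r)) = (\<Sum>r<c. g (i - int r))"
      unfolding sumeq by (simp add: g_def sum_subtractf algebra_simps)
    then have dims: "(\<Sum>r<c. H ((D + 1 - i) + int c - 1 - int r)) \<le> (\<Sum>r<c. H (i - int r))"
      using win by simp
    show ?thesis
    proof (intro exI conjI)
      show "0 \<le> i" by (rule i0)
      show "i < D + 1 - i" using i2 by simp
      show "(h (D + 1 - i) < h i \<and> (\<Sum>r<c. int (h (i - int r))) \<le> (\<Sum>r<c. int (h (D + 1 - i + int c - 1 - int r)))) \<or>
            (h i < h (D + 1 - i) \<and> (\<Sum>r<c. int (h (D + 1 - i + int c - 1 - int r))) \<le> (\<Sum>r<c. int (h (i - int r))))"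
        using gi dims by (simp add: g_def H_def)
    qed
  next
    case False
    then have F: "X - Y \<ge> p2" by simp
    have sgn: "H (D - i) \<le> H i" if "2*i \<le> D" for i
      using sign_neg[OF p F, of i] that Hf[of i] Hf[of "D - i"] D_def by simp
    from nac' obtain i1 where i1: "0 \<le> i1" "2*i1 \<le> D" "\<not> (H (i1-1) \<le> H (D-i1) \<and> H (D-i1) \<le> H i1)"
      by blast
    then have i1': "H (D - i1) < H (i1 - 1)" using sgn[of i1] by simp
    then have "i1 \<noteq> 0" using Hneg[of "-1"] H_def by auto
    then have i1p: "1 \<le> i1" using i1 by simp
    define P where "P n \<longleftrightarrow> 2 * int n \<le> D - 2 \<and> H (D - 1 - int n) < H (int n)" for n :: nat
    have Pex: "P (nat (i1 - 1))" using i1 i1' i1p by (simp add: P_def algebra_simps)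
    define n0 where "n0 = (LEAST n. P n)"
    have Pn0: "P n0" using Pex unfolding n0_def by (rule LeastI)
    have notP: "\<not> P n" if "n < n0" for n using not_less_Least[of n P] that n0_def by blast
    define g where "g k = H (D - 1 - k) - H k" for k
    define i where "i = int n0"
    have i0: "0 \<le> i" unfolding i_def by simp
    have i2: "2*i \<le> D - 2" and gi: "g i < 0" using Pn0 by (auto simp: P_def g_def i_def)
    have gge: "g k \<ge> 0" if "k < i" for k
    proof (cases "k < 0")
      case True
      then show ?thesis using Hneg[of k] H_def by (simp add: g_def)
    next
      case False
      then obtain n where n: "k = int n" by (metis nonneg_int_cases not_less)
      then have "n < n0" using that i_def by simp
      then have "\<not> P n" by (rule notP)
      moreover have "2 * int n \<le> D - 2" using i2 that n by simp
      ultimately show ?thesis by (auto simp: P_def g_def n)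
    qed
    have ggeq: "g k = (if 0 \<le> k+1 \<and> k+1 < min (p1+X) p2 then 1 else 0) + bx p1 Y (k+1-(X-Y)) - bx p1 Y (k - p2)"
      if "2*k \<le> D - 2" for k
      using g'form[OF p, of k] that Hf[of k] Hf[of "D - 1 - k"] by (simp add: g_def D_def algebra_simps)
    have loc: "g i + g (i-1) + g (i-2) \<ge> 0"
      using locB[OF p, of i] i2 gi gge[of "i-1"] gge[of "i-2"] ggeq[of i] ggeq[of "i-1"] ggeq[of "i-2"]
      by (simp add: D_def)
    have win: "(\<Sum>r<c. g (i - int r)) \<ge> 0"
      by (rule window_sum[OF c3 _ loc]) (use gge in auto)
    have "(\<Sum>r<c. H ((D - 1 - i) + int c - 1 - int r)) - (\<Sum>r<c. H (i - int r)) = (\<Sum>r<c. g (i - int r))"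
      unfolding sumeq by (simp add: g_def sum_subtractf algebra_simps)
    then have dims: "(\<Sum>r<c. H (i - int r)) \<le> (\<Sum>r<c. H ((D - 1 - i) + int c - 1 - int r))"
      using win by simp
    show ?thesis
    proof (intro exI conjI)
      show "0 \<le> i" by (rule i0)
      show "i < D - 1 - i" using i2 by simp
      show "(h (D - 1 - i) < h i \<and> (\<Sum>r<c. int (h (i - int r))) \<le> (\<Sum>r<c. int (h (D - 1 - i + int c - 1 - int r)))) \<or>
            (h i < h (D - 1 - i) \<and> (\<Sum>r<c. int (h (D - 1 - i + int c - 1 - int r))) \<le> (\<Sum>r<c. int (h (i - int r))))"
        using gi dims by (simp add: g_def H_def)
    qed
  qed
qed

lemma card_bx:
  fixes P Q n :: nat
  shows "int (card {(i,j). i < P \<and> j < Q \<and> i + j = n}) = bx (int P) (int Q) (int n)"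
proof -
  have eq: "{(i,j). i < P \<and> j < Q \<and> i + j = n} = (\<lambda>i. (i, n - i)) ` {n + 1 - Q..<min P (n+1)}"
  proof (rule set_eqI, rule iffI)
    fix x assume "x \<in> {(i,j). i < P \<and> j < Q \<and> i + j = n}"
    then obtain i j where x: "x = (i,j)" "i < P" "j < Q" "i + j = n" by blast
    then show "x \<in> (\<lambda>i. (i, n - i)) ` {n + 1 - Q..<min P (n+1)}"
      by (intro image_eqI[of _ _ i]) auto
  next
    fix x assume "x \<in> (\<lambda>i. (i, n - i)) ` {n + 1 - Q..<min P (n+1)}"
    then show "x \<in> {(i,j). i < P \<and> j < Q \<and> i + j = n}" by auto
  qed
  have "card {(i,j). i < P \<and> j < Q \<and> i + j = n} = card {n + 1 - Q..<min P (n+1)}"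
    unfolding eq by (rule card_image) (auto simp: inj_on_def)
  also have "\<dots> = min P (n+1) - (n + 1 - Q)" by simp
  finally show ?thesis unfolding bx_def by (simp add: of_nat_diff) linarith
qed

lemma hilbB_formula:
  fixes a b al be :: nat
  assumes "0 < al" "al < a" "0 < be" "be < b"
  shows "int (hilbB a b al be d) = bx (int a) (int be) d + bx (int al) (int b - int be) (d - int be)"
proof (cases "d < 0")
  case True
  then show ?thesis by (simp add: hilbB_def bx_neg)
next
  case False
  define n where "n = nat d"
  have dn: "d = int n" using False n_def by simp
  have split: "{(i,j). i < a \<and> j < b \<and> \<not> (al \<le> i \<and> be \<le> j) \<and> int (i + j) = d} =
     {(i,j). i < a \<and> j < be \<and> i + j = n} \<union> {(i,j). i < al \<and> be \<le> j \<and> j < b \<and> i + j = n}"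
    using assms unfolding dn by auto
  have disj: "{(i,j). i < a \<and> j < be \<and> i + j = n} \<inter> {(i,j). i < al \<and> be \<le> j \<and> j < b \<and> i + j = n} = {}"
    by auto
  have fin1: "finite {(i,j). i < a \<and> j < be \<and> i + j = n}"
    by (rule finite_subset[of _ "{..<a} \<times> {..<be}"]) auto
  have fin2: "finite {(i,j). i < al \<and> be \<le> j \<and> j < b \<and> i + j = n}"
    by (rule finite_subset[of _ "{..<al} \<times> {..<b}"]) auto
  have c2: "int (card {(i,j). i < al \<and> be \<le> j \<and> j < b \<and> i + j = n}) = bx (int al) (int b - int be) (d - int be)"
  proof (cases "be \<le> n")
    case True
    have eq2: "{(i,j). i < al \<and> be \<le> j \<and> j < b \<and> i + j = n} = (\<lambda>(i,j). (i, j + be)) ` {(i,j). i < al \<and> j < b - be \<and> i + j = n - be}"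
    proof (rule set_eqI, rule iffI)
      fix x assume "x \<in> {(i,j). i < al \<and> be \<le> j \<and> j < b \<and> i + j = n}"
      then obtain i j where x: "x = (i,j)" "i < al" "be \<le> j" "j < b" "i + j = n" by blast
      then show "x \<in> (\<lambda>(i,j). (i, j + be)) ` {(i,j). i < al \<and> j < b - be \<and> i + j = n - be}"
        by (intro image_eqI[of _ _ "(i, j - be)"]) auto
    qed (use True in auto)
    have "card {(i,j). i < al \<and> be \<le> j \<and> j < b \<and> i + j = n} = card {(i,j). i < al \<and> j < b - be \<and> i + j = n - be}"
      unfolding eq2 by (rule card_image) (auto simp: inj_on_def)
    then show ?thesis using card_bx[of al "b - be" "n - be"] True assms dn by (simp add: of_nat_diff)
  next
    case False
    then have e: "{(i,j). i < al \<and> be \<le> j \<and> j < b \<and> i + j = n} = {}" by auto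
    show ?thesis unfolding e using False dn by (simp add: bx_neg)
  qed
  have "hilbB a b al be d = card ({(i,j). i < a \<and> j < be \<and> i + j = n} \<union> {(i,j). i < al \<and> be \<le> j \<and> j < b \<and> i + j = n})"
    using False unfolding hilbB_def split by simp
  also have "\<dots> = card {(i,j). i < a \<and> j < be \<and> i + j = n} + card {(i,j). i < al \<and> be \<le> j \<and> j < b \<and> i + j = n}"
    by (rule card_Un_disjoint[OF fin1 fin2 disj])
  finally show ?thesis using card_bx[of a be n] c2 dn by simp
qed

lemma hilbB_sym: "hilbB a b al be d = hilbB b a be al d"
proof -
  have "{(i,j). i < a \<and> j < b \<and> \<not> (al \<le> i \<and> be \<le> j) \<and> int (i + j) = d} =
        prod.swap ` {(j,i). j < b \<and> i < a \<and> \<not> (be \<le> j \<and> al \<le> i) \<and> int (j + i) = d}"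
    by (auto simp: image_iff add.commute)
  then have "card {(i,j). i < a \<and> j < b \<and> \<not> (al \<le> i \<and> be \<le> j) \<and> int (i + j) = d} =
        card {(j,i). j < b \<and> i < a \<and> \<not> (be \<le> j \<and> al \<le> i) \<and> int (j + i) = d}"
    by (simp add: card_image)
  then show ?thesis unfolding hilbB_def by simp
qed

lemma card_Mz_stdA:
  assumes "0 < c"
  shows "card {m \<in> stdA a b c al be. mdeg m = d \<and> snd (snd m) = 0} = hilbB a b al be (int d)"
proof -
  have "{m \<in> stdA a b c al be. mdeg m = d \<and> snd (snd m) = 0} =
        (\<lambda>(i,j). (i,j,0)) ` {(i,j). i < a \<and> j < b \<and> \<not> (al \<le> i \<and> be \<le> j) \<and> int (i + j) = int d}"
    using assms by (auto simp: stdA_def mdeg_def image_iff)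
  then have "card {m \<in> stdA a b c al be. mdeg m = d \<and> snd (snd m) = 0} =
        card {(i,j). i < a \<and> j < b \<and> \<not> (al \<le> i \<and> be \<le> j) \<and> int (i + j) = int d}"
    by (simp add: card_image inj_on_def)
  then show ?thesis by (simp add: hilbB_def)
qed

lemma card_Sd_stdA:
  shows "int (card {m \<in> stdA a b c al be. mdeg m = d}) = (\<Sum>r<c. int (hilbB a b al be (int d - int r)))"
proof -
  define Bs where "Bs n = {(i,j). i < a \<and> j < b \<and> \<not> (al \<le> i \<and> be \<le> j) \<and> i + j = n}" for n
  have finB: "finite (Bs n)" for n
    by (rule finite_subset[of _ "{..<a} \<times> {..<b}"]) (auto simp: Bs_def)
  have eq: "{m \<in> stdA a b c al be. mdeg m = d} = (\<lambda>(r,i,j). (i,j,r)) ` (SIGMA r:{r. r < c \<and> r \<le> d}. Bs (d - r))"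
  proof (rule set_eqI, rule iffI)
    fix x assume "x \<in> {m \<in> stdA a b c al be. mdeg m = d}"
    then obtain i j l where x: "x = (i,j,l)" "(i,j,l) \<in> stdA a b c al be" "i + j + l = d"
      by (auto simp: mdeg_def split: prod.splits)
    then show "x \<in> (\<lambda>(r,i,j). (i,j,r)) ` (SIGMA r:{r. r < c \<and> r \<le> d}. Bs (d - r))"
      by (intro image_eqI[of _ _ "(l,i,j)"]) (auto simp: stdA_def Bs_def)
  qed (auto simp: stdA_def Bs_def mdeg_def)
  have "card {m \<in> stdA a b c al be. mdeg m = d} = card (SIGMA r:{r. r < c \<and> r \<le> d}. Bs (d - r))"
    unfolding eq by (rule card_image) (auto simp: inj_on_def)
  also have "\<dots> = (\<Sum>r\<in>{r. r < c \<and> r \<le> d}. card (Bs (d - r)))"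
    by (rule card_SigmaI) (auto simp: finB)
  finally have "int (card {m \<in> stdA a b c al be. mdeg m = d}) = (\<Sum>r\<in>{r \<in> {..<c}. r \<le> d}. int (card (Bs (d - r))))"
    by simp
  also have "\<dots> = (\<Sum>r<c. if r \<le> d then int (card (Bs (d - r))) else 0)"
    by (rule sum.inter_filter) simp
  also have "\<dots> = (\<Sum>r<c. int (hilbB a b al be (int d - int r)))"
  proof (rule sum.cong[OF refl])
    fix r
    show "(if r \<le> d then int (card (Bs (d - r))) else 0) = int (hilbB a b al be (int d - int r))"
    proof (cases "r \<le> d")
      case True
      have "{(i,j). i < a \<and> j < b \<and> \<not> (al \<le> i \<and> be \<le> j) \<and> int (i + j) = int d - int r} = Bs (d - r)"
        using True by (auto simp: Bs_def)
      then show ?thesis using True by (simp add: hilbB_def of_nat_diff)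
    qed (simp add: hilbB_def)
  qed
  finally show ?thesis .
qed

theorem lemma3p7:
  fixes a b c al be :: nat
  assumes "c \<ge> 3" and "0 < al" and "0 < be" and "al < a" and "be < b"
    and "\<not> almost_centered (hilbB a b al be)"
  shows "\<not> SLP TYPE('k::field_char_0) (stdA a b c al be)"
proof
  assume slp: "SLP TYPE('k) (stdA a b c al be)"
  note ass = assms
  define S where "S = stdA a b c al be"
  have salg: "Salg S c"
  proof
    show "dclosed S" unfolding dclosed_def S_def stdA_def by auto
    show "finite S"
      by (rule finite_subset[of _ "{..<a} \<times> {..<b} \<times> {..<c}"]) (auto simp: S_def stdA_def)
    show "(0,0,0) \<in> S" using ass by (auto simp: S_def stdA_def)
    show "\<And>i j l. (i,j,l) \<in> S \<Longrightarrow> l < c" by (auto simp: S_def stdA_def)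
    show "\<And>i j l l'. l < c \<Longrightarrow> l' < c \<Longrightarrow> (i,j,l) \<in> S \<longleftrightarrow> (i,j,l') \<in> S"
      by (auto simp: S_def stdA_def)
  qed
  interpret Salg S c by (rule salg)
  from slp obtain L where L: "L \<in> (graded S 1 :: (mon3 \<Rightarrow> 'k) set)"
    and allt: "\<forall>t\<ge>1. \<forall>i. inj_on (qmult S (qpow S L t)) (graded S i) \<or>
                qmult S (qpow S L t) ` graded S i = graded S (i + t)"
    unfolding SLP_def S_def by blast
  define h where "h = hilbB a b al be"
  have c3: "c \<ge> 3" using ass by simp
  have "\<exists>i e::int. 0 \<le> i \<and> i < e \<and>
     ((h e < h i \<and> (\<Sum>r<c. int (h (i - int r))) \<le> (\<Sum>r<c. int (h (e + int c - 1 - int r)))) \<or>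
      (h i < h e \<and> (\<Sum>r<c. int (h (e + int c - 1 - int r))) \<le> (\<Sum>r<c. int (h (i - int r)))))"
  proof (cases "b - be \<le> a - al")
    case True
    show ?thesis
    proof (rule comb_main[of "int al" "int be" "int b - int be" "int a - int al" c h])
      show "int al \<ge> 1" "int be \<ge> 1" "int b - int be \<ge> 1" "int a - int al \<ge> int b - int be"
        using ass True by auto
      show "c \<ge> 3" by (rule c3)
      show "\<And>d. int (h d) = bx (int al + (int a - int al)) (int be) d + bx (int al) (int b - int be) (d - int be)"
        using hilbB_formula[OF ass(2,4,3,5)] by (simp add: h_def)
      show "\<not> almost_centered h" using ass by (simp add: h_def)
    qed
  next
    case False
    have hs: "h = hilbB b a be al" unfolding h_def by (rule ext) (rule hilbB_sym)
    show ?thesis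
    proof (rule comb_main[of "int be" "int al" "int a - int al" "int b - int be" c h])
      show "int be \<ge> 1" "int al \<ge> 1" "int a - int al \<ge> 1" "int b - int be \<ge> int a - int al"
        using ass False by auto
      show "c \<ge> 3" by (rule c3)
      show "\<And>d. int (h d) = bx (int be + (int b - int be)) (int al) d + bx (int be) (int a - int al) (d - int al)"
        using hilbB_formula[OF ass(3,5,2,4)] by (simp add: hs)
      show "\<not> almost_centered h" using ass by (simp add: h_def)
    qed
  qed
  then obtain i e :: int where ie: "0 \<le> i" "i < e" and
    cs: "(h e < h i \<and> (\<Sum>r<c. int (h (i - int r))) \<le> (\<Sum>r<c. int (h (e + int c - 1 - int r)))) \<or>
      (h i < h e \<and> (\<Sum>r<c. int (h (e + int c - 1 - int r))) \<le> (\<Sum>r<c. int (h (i - int r))))"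
    by blast
  define ni where "ni = nat i"
  define ne where "ne = nat e"
  define t where "t = ne + c - 1 - ni"
  have ini: "i = int ni" and ene: "e = int ne" using ie by (auto simp: ni_def ne_def)
  have nine: "ni < ne" using ie ini ene by simp
  have ct: "c \<le> t" using nine c3 by (simp add: t_def)
  have t1: "t \<ge> 1" using ct c3 by simp
  have cpos: "0 < c" using c3 by simp
  have eq1: "ni + (t + 1 - c) = ne" using nine c3 by (simp add: t_def)
  have eq2: "int ni + int t = e + int c - 1" using nine c3 ene by (simp add: t_def of_nat_diff)
  have cM: "card (Mz d) = h (int d)" for d
  proof -
    have "Mz d = {m \<in> S. mdeg m = d \<and> snd (snd m) = 0}" by (rule Mz_def)
    then show ?thesis unfolding S_def h_def using card_Mz_stdA[OF cpos] by simp
  qed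
  have cS: "int (card (Sd d)) = (\<Sum>r<c. int (h (int d - int r)))" for d
  proof -
    have "Sd d = {m \<in> S. mdeg m = d}" by (rule Sd_def)
    then show ?thesis unfolding S_def h_def using card_Sd_stdA by simp
  qed
  have res: "\<not> inj_on (qmult S (qpow S L t)) (graded S ni) \<and>
         qmult S (qpow S L t) ` graded S ni \<noteq> graded S (ni + t)"
  proof (cases "h e < h i \<and> (\<Sum>r<c. int (h (i - int r))) \<le> (\<Sum>r<c. int (h (e + int c - 1 - int r)))")
    case True
    show ?thesis
    proof (rule core_III[OF L ct])
      show "card (Mz (ni + (t + 1 - c))) < card (Mz ni)" unfolding eq1 using True by (simp add: cM ini ene)
      have "int (card (Sd ni)) \<le> int (card (Sd (ni + t)))" using True by (simp add: cS eq2 ini)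
      then show "card (Sd ni) \<le> card (Sd (ni + t))" by simp
    qed
  next
    case False
    then have F: "h i < h e \<and> (\<Sum>r<c. int (h (e + int c - 1 - int r))) \<le> (\<Sum>r<c. int (h (i - int r)))"
      using cs by blast
    show ?thesis
    proof (rule core_IV[OF L ct])
      show "card (Mz ni) < card (Mz (ni + (t + 1 - c)))" unfolding eq1 using F by (simp add: cM ini ene)
      have "int (card (Sd (ni + t))) \<le> int (card (Sd ni))" using F by (simp add: cS eq2 ini)
      then show "card (Sd (ni + t)) \<le> card (Sd ni)" by simp
    qed
  qed
  then show False using allt t1 by blast
qed

end
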